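(* The metric space $(\mathrm{Conf}^{lf}_\infty(\mathbb C),d_{\Sigma})$ is path-connected.
   Context: $\mathrm{Conf}^{lf}_\infty(\mathbb C)$ is the set of sequences $(x_j)_{j\ge1}$ of pairwise distinct complex numbers such that $\{j:|x_j|\le R\}$ is finite for all $R>0$, with metric $d_{\Sigma}(x,y)=\sum_j2^{-j}\min\{|x_j-y_j|,1\}+d_{\mathcal V}(P(x),P(y))$, where $P(x)=\{x_j\}$ and $d_{\mathcal V}$ is the vague metric $d_{\mathcal V}(A,B)=\sum_j 2^{-j}\frac{|\sum_{a\in A}\varphi_j(a)-\sum_{b\in B}\varphi_j(b)|}{1+|\sum_{a\in A}\varphi_j(a)-\sum_{b\in B}\varphi_j(b)|}$ for a fixed sequence $(\varphi_j)$ of compactly supported continuous real functions such that for each $m$ those supported in $\{|z|\le m\}$ are sup-norm dense among such functions supported in $\{|z|\le m\}$. *)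

theory Defs
  imports "HOL-Analysis.Analysis"
begin

text \<open>Sequences are indexed by nat starting at 0; index j here corresponds to
  index j+1 in the paper, so the weight 2^(-j) of the paper becomes 2^(-(j+1)).\<close>

definition Conf_lf :: "(nat \<Rightarrow> complex) set" where
  "Conf_lf = {x. inj x \<and> (\<forall>R>0. finite {j. cmod (x j) \<le> R})}"

definition P :: "(nat \<Rightarrow> complex) \<Rightarrow> complex set" where
  "P x = range x"

definition cfgsum :: "(complex \<Rightarrow> real) \<Rightarrow> complex set \<Rightarrow> real" where
  "cfgsum f A = (\<Sum>a\<in>{a\<in>A. f a \<noteq> 0}. f a)"

definition vague_dist :: "(nat \<Rightarrow> complex \<Rightarrow> real) \<Rightarrow> complex set \<Rightarrow> complex set \<Rightarrow> real" where
  "vague_dist \<phi> A B =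
     (\<Sum>j. (1/2) ^ (Suc j) *
        (\<bar>cfgsum (\<phi> j) A - cfgsum (\<phi> j) B\<bar> / (1 + \<bar>cfgsum (\<phi> j) A - cfgsum (\<phi> j) B\<bar>)))"

definition dSigma :: "(nat \<Rightarrow> complex \<Rightarrow> real) \<Rightarrow> (nat \<Rightarrow> complex) \<Rightarrow> (nat \<Rightarrow> complex) \<Rightarrow> real" where
  "dSigma \<phi> x y = (\<Sum>j. (1/2) ^ (Suc j) * min (cmod (x j - y j)) 1) + vague_dist \<phi> (P x) (P y)"

definition tsupp :: "(complex \<Rightarrow> real) \<Rightarrow> complex set" where
  "tsupp f = closure {z. f z \<noteq> 0}"

definition admissible_tests :: "(nat \<Rightarrow> complex \<Rightarrow> real) \<Rightarrow> bool" where
  "admissible_tests \<phi> \<longleftrightarrow>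
     (\<forall>j. continuous_on UNIV (\<phi> j) \<and> compact (tsupp (\<phi> j))) \<and>
     (\<forall>m::nat. \<forall>f. continuous_on UNIV f \<and> tsupp f \<subseteq> cball 0 (real m) \<longrightarrow>
        (\<forall>e>0. \<exists>j. tsupp (\<phi> j) \<subseteq> cball 0 (real m) \<and> (\<forall>z. \<bar>f z - \<phi> j z\<bar> < e)))"

end

theory Submission
  imports Defs
begin


lemma wsum_summable:
  fixes f :: "nat \<Rightarrow> real"
  assumes "\<And>j. 0 \<le> f j" "\<And>j. f j \<le> 1"
  shows "summable (\<lambda>j. (1/2)^Suc j * f j)"
proof (rule summable_comparison_test[of _ "\<lambda>j. (1/2::real)^Suc j"])
  show "\<exists>N. \<forall>n\<ge>N. norm ((1/2)^Suc n * f n) \<le> (1/2::real)^Suc n"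
    using assms by (auto intro!: mult_left_le)
  show "summable (\<lambda>j. (1/2::real)^Suc j)"
    by (simp add: summable_geometric)
qed

lemma wsum_nonneg:
  fixes f :: "nat \<Rightarrow> real"
  assumes "\<And>j. 0 \<le> f j" "\<And>j. f j \<le> 1"
  shows "0 \<le> (\<Sum>j. (1/2)^Suc j * f j)"
  using assms wsum_summable[OF assms] by (intro suminf_nonneg) auto

lemma wsum_tri:
  fixes f g h :: "nat \<Rightarrow> real"
  assumes "\<And>j. 0 \<le> f j" "\<And>j. f j \<le> 1" "\<And>j. 0 \<le> g j" "\<And>j. g j \<le> 1"
     "\<And>j. 0 \<le> h j" "\<And>j. h j \<le> 1" "\<And>j. f j \<le> g j + h j"
  shows "(\<Sum>j. (1/2)^Suc j * f j) \<le> (\<Sum>j. (1/2)^Suc j * g j) + (\<Sum>j. (1/2)^Suc j * h j)"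
proof -
  have sf: "summable (\<lambda>j. (1/2)^Suc j * f j)" using wsum_summable assms by blast
  have sg: "summable (\<lambda>j. (1/2)^Suc j * g j)" using wsum_summable assms by blast
  have sh: "summable (\<lambda>j. (1/2)^Suc j * h j)" using wsum_summable assms by blast
  have "(\<Sum>j. (1/2)^Suc j * f j) \<le> (\<Sum>j. (1/2)^Suc j * g j + (1/2)^Suc j * h j)"
    by (intro suminf_le sf summable_add sg sh) (simp add: assms(7) flip: distrib_left)
  also have "\<dots> = (\<Sum>j. (1/2)^Suc j * g j) + (\<Sum>j. (1/2)^Suc j * h j)"
    by (intro suminf_add[symmetric] sg sh)
  finally show ?thesis .
qed

lemma wsum_zero:
  fixes f :: "nat \<Rightarrow> real"
  assumes "\<And>j. 0 \<le> f j" "\<And>j. f j \<le> 1" "(\<Sum>j. (1/2)^Suc j * f j) = 0"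
  shows "f j = 0"
proof -
  have "(\<lambda>j. (1/2)^Suc j * f j) = (\<lambda>_. 0)"
    using suminf_eq_zero_iff[OF wsum_summable[OF assms(1,2)]] assms by auto
  then have "(1/2::real)^Suc j * f j = 0" by metis
  then show ?thesis by simp
qed

definition hh :: "real \<Rightarrow> real" where "hh u = \<bar>u\<bar> / (1 + \<bar>u\<bar>)"

lemma hh_props: "0 \<le> hh u" "hh u \<le> 1"
  by (auto simp: hh_def divide_simps)

lemma hh_tri: "hh (a - c) \<le> hh (a - b) + hh (b - c)"
proof -
  have mono: "p / (1 + p) \<le> q / (1 + q)" if "0 \<le> p" "p \<le> q" for p q :: real
    using that by (simp add: divide_simps algebra_simps)
  have sub: "(p + q) / (1 + (p + q)) \<le> p / (1 + p) + q / (1 + q)" if "0 \<le> p" "0 \<le> q" for p q :: real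
    using that by (simp add: divide_simps) (simp add: algebra_simps mult_nonneg_nonneg)
  have "hh (a - c) \<le> (\<bar>a - b\<bar> + \<bar>b - c\<bar>) / (1 + (\<bar>a - b\<bar> + \<bar>b - c\<bar>))"
    unfolding hh_def by (rule mono) auto
  also have "\<dots> \<le> hh (a - b) + hh (b - c)" unfolding hh_def by (rule sub) auto
  finally show ?thesis .
qed

lemma vague_dist_hh: "vague_dist \<phi> A B = (\<Sum>j. (1/2)^Suc j * hh (cfgsum (\<phi> j) A - cfgsum (\<phi> j) B))"
  by (simp add: vague_dist_def hh_def)

lemma metric_dSigma: "Metric_space Conf_lf (dSigma \<phi>)"
proof
  fix x y z :: "nat \<Rightarrow> complex"
  show "0 \<le> dSigma \<phi> x y"
    unfolding dSigma_def vague_dist_hh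
    by (intro add_nonneg_nonneg wsum_nonneg hh_props) auto
  show "dSigma \<phi> x y = dSigma \<phi> y x"
    unfolding dSigma_def vague_dist_hh hh_def by (simp add: norm_minus_commute abs_minus_commute)
  show "dSigma \<phi> x z \<le> dSigma \<phi> x y + dSigma \<phi> y z"
  proof -
    have "(\<Sum>j. (1/2)^Suc j * min (cmod (x j - z j)) 1) \<le> (\<Sum>j. (1/2)^Suc j * min (cmod (x j - y j)) 1) + (\<Sum>j. (1/2)^Suc j * min (cmod (y j - z j)) 1)"
    proof (rule wsum_tri)
      fix j
      have "cmod (x j - z j) \<le> cmod (x j - y j) + cmod (y j - z j)" by (rule norm_triangle_ineq4[of "x j - y j" "z j - y j", simplified, THEN order_trans]) (simp add: norm_minus_commute)
      then show "min (cmod (x j - z j)) 1 \<le> min (cmod (x j - y j)) 1 + min (cmod (y j - z j)) 1"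
        unfolding min_def by (smt (verit) norm_ge_zero)
    qed auto
    moreover have "vague_dist \<phi> (P x) (P z) \<le> vague_dist \<phi> (P x) (P y) + vague_dist \<phi> (P y) (P z)"
      unfolding vague_dist_hh by (rule wsum_tri) (auto simp: hh_props hh_tri)
    ultimately show ?thesis unfolding dSigma_def by linarith
  qed
  assume "x \<in> Conf_lf" "y \<in> Conf_lf"
  show "dSigma \<phi> x y = 0 \<longleftrightarrow> x = y"
  proof
    assume "x = y" then show "dSigma \<phi> x y = 0" by (simp add: dSigma_def vague_dist_hh hh_def)
  next
    assume 0: "dSigma \<phi> x y = 0"
    have a: "0 \<le> (\<Sum>j. (1/2)^Suc j * min (cmod (x j - y j)) 1)" by (rule wsum_nonneg) auto
    have b: "0 \<le> vague_dist \<phi> (P x) (P y)" unfolding vague_dist_hh by (rule wsum_nonneg) (auto simp: hh_props)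
    have "(\<Sum>j. (1/2)^Suc j * min (cmod (x j - y j)) 1) = 0" using 0 a b unfolding dSigma_def by linarith
    then have "min (cmod (x j - y j)) 1 = 0" for j by (rule wsum_zero[rotated 2]) auto
    then have "x j = y j" for j
      by (metis min_def norm_eq_zero right_minus_eq zero_neq_one)
    then show "x = y" by blast
  qed
qed



lemma cont_wsum:
  fixes f :: "nat \<Rightarrow> real \<Rightarrow> real"
  assumes "\<And>j. continuous_on S (f j)" "\<And>j s. s \<in> S \<Longrightarrow> 0 \<le> f j s \<and> f j s \<le> 1"
  shows "continuous_on S (\<lambda>s. \<Sum>j. (1/2)^Suc j * f j s)"
proof (rule uniform_limit_theorem)
  show "\<forall>\<^sub>F n in sequentially. continuous_on S (\<lambda>s. \<Sum>i<n. (1/2)^Suc i * f i s)"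
    by (intro always_eventually allI continuous_intros assms)
  show "uniform_limit S (\<lambda>n s. \<Sum>i<n. (1/2)^Suc i * f i s) (\<lambda>s. \<Sum>j. (1/2)^Suc j * f j s) sequentially"
  proof (rule Weierstrass_m_test[where M="\<lambda>j. (1/2)^Suc j"])
    fix n s assume "s \<in> S"
    then show "norm ((1/2::real)^Suc n * f n s) \<le> (1/2)^Suc n"
      using assms(2)[of s n] by (auto intro!: mult_left_le)
  next
    show "summable (\<lambda>j. (1/2::real)^Suc j)" by (simp add: summable_geometric)
  qed
qed simp

lemma Conf_lf_finite:
  assumes "x \<in> Conf_lf" shows "finite {j. cmod (x j) \<le> R}"
proof -
  have "finite {j. cmod (x j) \<le> max R 1}" using assms by (auto simp: Conf_lf_def)
  then show ?thesis by (rule finite_subset[rotated]) auto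
qed

lemma cfgsum_eq:
  assumes "inj g" "finite I" "\<And>i. f (g i) \<noteq> 0 \<Longrightarrow> i \<in> I"
  shows "cfgsum f (range g) = (\<Sum>i\<in>I. f (g i))"
proof -
  have "{a\<in>range g. f a \<noteq> 0} = g ` {i\<in>I. f (g i) \<noteq> 0}" using assms(3) by auto
  moreover have "inj_on g {i\<in>I. f (g i) \<noteq> 0}" using assms(1) by (metis inj_on_subset subset_UNIV)
  ultimately have "cfgsum f (range g) = (\<Sum>i\<in>{i\<in>I. f (g i) \<noteq> 0}. f (g i))"
    unfolding cfgsum_def using sum.reindex[of g "{i\<in>I. f (g i) \<noteq> 0}" f] by simp
  also have "\<dots> = (\<Sum>i\<in>I. f (g i))"
    by (rule sum.mono_neutral_left) (use assms(2) in auto)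
  finally show ?thesis .
qed

lemma adm_D: "admissible_tests \<phi> \<Longrightarrow> continuous_on UNIV (\<phi> j) \<and> compact (tsupp (\<phi> j))"
proof -
  assume "admissible_tests \<phi>"
  then have "\<forall>j. continuous_on UNIV (\<phi> j) \<and> compact (tsupp (\<phi> j))"
    unfolding admissible_tests_def by (rule conjunct1)
  then show ?thesis by (rule spec)
qed

lemma one_plus_abs_ne: "1 + \<bar>u::real\<bar> \<noteq> 0"
  by arith

lemma path_lemma:
  fixes g :: "real \<Rightarrow> nat \<Rightarrow> complex"
  assumes adm: "admissible_tests \<phi>"
  and inj: "\<And>t. t \<in> {0..1} \<Longrightarrow> inj (g t)"
  and cont: "\<And>j. continuous_on {0..1} (\<lambda>t. g t j)"
  and lf: "\<And>R. finite {j. \<exists>t\<in>{0..1}. cmod (g t j) \<le> R}"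
  shows "path_component_of (Metric_space.mtopology Conf_lf (dSigma \<phi>)) (g 0) (g 1)"
proof -
  interpret Metric_space Conf_lf "dSigma \<phi>" by (rule metric_dSigma)
  have inM: "g t \<in> Conf_lf" if "t \<in> {0..1}" for t
    unfolding Conf_lf_def
  proof (intro CollectI conjI allI impI)
    show "inj (g t)" using inj that .
    fix R :: real
    show "finite {j. cmod (g t j) \<le> R}"
      by (rule finite_subset[OF _ lf[of R]]) (use that in auto)
  qed
  have F: "continuous_on {0..1} (\<lambda>s. cfgsum (\<phi> j) (P (g s)))" for j
  proof -
    have "compact (tsupp (\<phi> j))" and cphi: "continuous_on UNIV (\<phi> j)"
      using adm_D[OF adm, of j] by auto
    then obtain R where R: "\<And>z. z \<in> tsupp (\<phi> j) \<Longrightarrow> cmod z \<le> R"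
      using compact_imp_bounded bounded_iff by metis
    have Rz: "cmod z \<le> R" if "\<phi> j z \<noteq> 0" for z
    proof -
      have "z \<in> tsupp (\<phi> j)" unfolding tsupp_def by (rule subsetD[OF closure_subset]) (simp add: that)
      then show ?thesis by (rule R)
    qed
    define I where "I = {i. \<exists>t\<in>{0..1}. cmod (g t i) \<le> R}"
    have "finite I" unfolding I_def by (rule lf)
    have eq: "cfgsum (\<phi> j) (P (g s)) = (\<Sum>i\<in>I. \<phi> j (g s i))" if "s \<in> {0..1}" for s
      unfolding P_def
      by (rule cfgsum_eq[OF inj[OF that] \<open>finite I\<close>]) (use Rz that in \<open>unfold I_def, blast\<close>)
    have "continuous_on {0..1} (\<lambda>s. \<Sum>i\<in>I. \<phi> j (g s i))"
      by (intro continuous_intros continuous_on_compose2[OF cphi cont]) auto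
    moreover have "continuous_on {0..1} (\<lambda>s. cfgsum (\<phi> j) (P (g s))) = continuous_on {0..1} (\<lambda>s. \<Sum>i\<in>I. \<phi> j (g s i))"
      by (rule continuous_on_cong) (simp_all add: eq)
    ultimately show ?thesis by (simp only:)
  qed
  have D: "continuous_on {0..1} (\<lambda>s. dSigma \<phi> (g t) (g s))" for t
  proof -
    have c1: "continuous_on {0..1} (\<lambda>s. \<Sum>j. (1/2)^Suc j * min (cmod (g t j - g s j)) 1)"
    proof (rule cont_wsum)
      fix j show "continuous_on {0..1} (\<lambda>s. min (cmod (g t j - g s j)) 1)"
        by (intro continuous_intros cont)
    qed auto
    have c2: "continuous_on {0..1} (\<lambda>s. \<Sum>j. (1/2)^Suc j * hh (cfgsum (\<phi> j) (P (g t)) - cfgsum (\<phi> j) (P (g s))))"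
    proof (rule cont_wsum)
      fix j show "continuous_on {0..1} (\<lambda>s. hh (cfgsum (\<phi> j) (P (g t)) - cfgsum (\<phi> j) (P (g s))))"
        unfolding hh_def
        by (intro continuous_on_divide continuous_intros F) (simp add: one_plus_abs_ne)
    qed (simp add: hh_props)
    show ?thesis unfolding dSigma_def vague_dist_hh by (intro continuous_on_add c1 c2)
  qed
  have "pathin mtopology g"
    unfolding pathin_def continuous_map_to_metric
  proof (intro ballI allI impI)
    fix t :: real and e :: real
    assume t: "t \<in> topspace (top_of_set {0..1})" and e: "0 < e"
    then have t01: "t \<in> {0..1}" by simp
    define U where "U = {0..1} \<inter> (\<lambda>s. dSigma \<phi> (g t) (g s)) -` {..<e}"
    have "openin (top_of_set {0..1}) U"
      unfolding U_def by (rule continuous_openin_preimage_gen[OF D]) auto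
    moreover have "t \<in> U" using t01 e inM[OF t01] by (simp add: U_def)
    moreover have "\<forall>y\<in>U. g y \<in> mball (g t) e"
      using inM t01 by (auto simp: U_def)
    ultimately show "\<exists>U. openin (top_of_set {0..1}) U \<and> t \<in> U \<and> (\<forall>y\<in>U. g y \<in> mball (g t) e)"
      by blast
  qed
  then show ?thesis unfolding path_component_of_def by blast
qed



lemma quad_roots_finite:
  fixes a b :: complex
  assumes "a \<noteq> b"
  shows "finite {s::real. cmod (a + Complex s (s^2)) = cmod (b + Complex s (s^2))}"
proof -
  define p where "p = [: (Re a)^2 + (Im a)^2 - (Re b)^2 - (Im b)^2, 2*(Re a - Re b), 2*(Im a - Im b) :]"
  have "p \<noteq> 0"
  proof
    assume "p = 0"
    then have "Re a = Re b" "Im a = Im b" by (auto simp: p_def)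
    then show False using assms complex_eqI by blast
  qed
  have "{s::real. cmod (a + Complex s (s^2)) = cmod (b + Complex s (s^2))} \<subseteq> {s. poly p s = 0}"
  proof safe
    fix s :: real
    assume "cmod (a + Complex s (s^2)) = cmod (b + Complex s (s^2))"
    then have "(cmod (a + Complex s (s^2)))^2 = (cmod (b + Complex s (s^2)))^2" by simp
    then have "(Re a + s)^2 + (Im a + s^2)^2 = (Re b + s)^2 + (Im b + s^2)^2"
      by (simp add: cmod_power2)
    then show "poly p s = 0" by (simp add: p_def power2_eq_square algebra_simps)
  qed
  then show ?thesis using poly_roots_finite[OF \<open>p \<noteq> 0\<close>] finite_subset by blast
qed

lemma exists_shift:
  assumes "x \<in> Conf_lf"
  shows "\<exists>c. (\<forall>j. x j + c \<noteq> 0) \<and> (\<forall>j k. j \<noteq> k \<longrightarrow> cmod (x j + c) \<noteq> cmod (x k + c))"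
proof -
  have injx: "inj x" using assms by (simp add: Conf_lf_def)
  define B1 where "B1 j = {s::real. x j + Complex s (s^2) = 0}" for j
  define B2 where "B2 j k = {s::real. cmod (x j + Complex s (s^2)) = cmod (x k + Complex s (s^2))}" for j k
  have "B1 j \<subseteq> {- Re (x j)}" for j
  proof
    fix s assume "s \<in> B1 j"
    then have "Re (x j + Complex s (s^2)) = 0" by (simp add: B1_def)
    then show "s \<in> {- Re (x j)}" by simp
  qed
  then have c1: "countable (B1 j)" for j by (meson countable_finite finite.emptyI finite_insert finite_subset)
  have c2: "countable (B2 j k)" if "j \<noteq> k" for j k
    unfolding B2_def using that injx by (intro countable_finite quad_roots_finite) (simp add: inj_eq)
  define Bad where "Bad = (\<Union>j. B1 j) \<union> (\<Union>j. \<Union>k\<in>-{j}. B2 j k)"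
  have "countable (\<Union>k\<in>-{j}. B2 j k)" for j
    by (rule countable_UN) (auto intro: c2)
  then have "countable Bad" unfolding Bad_def using c1 by auto
  then have "Bad \<noteq> UNIV" using uncountable_UNIV_real by auto
  then obtain s where s: "s \<notin> Bad" by auto
  show ?thesis
  proof (intro exI conjI allI impI)
    fix j show "x j + Complex s (s^2) \<noteq> 0" using s by (auto simp: Bad_def B1_def)
  next
    fix j k :: nat assume "j \<noteq> k"
    then show "cmod (x j + Complex s (s^2)) \<noteq> cmod (x k + Complex s (s^2))"
      using s by (auto simp: Bad_def B2_def)
  qed
qed



definition th :: "nat \<Rightarrow> real" where "th j = 1 / (real j + 1)"

lemma th_range1: "0 < th j" "th j \<le> 1"
  by (auto simp: th_def divide_simps)

lemma th_range: "th j \<in> {-pi<..pi}"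
  using th_range1[of j] pi_gt3 by auto

lemma th_inj: "th j = th k \<Longrightarrow> j = k"
  by (simp add: th_def divide_simps)

lemma Arg_rcis_th: "0 < r \<Longrightarrow> Arg (rcis r (th j)) = th j"
  by (simp add: rcis_def Arg_cis[OF th_range])

lemma step1:
  assumes adm: "admissible_tests \<phi>" and x: "x \<in> Conf_lf"
  shows "\<exists>u. path_component_of (Metric_space.mtopology Conf_lf (dSigma \<phi>)) x u \<and>
     (\<forall>j. u j \<noteq> 0) \<and> (\<forall>j k. j \<noteq> k \<longrightarrow> cmod (u j) \<noteq> cmod (u k)) \<and> (\<forall>R. finite {j. cmod (u j) \<le> R})"
proof -
  obtain c where c: "\<And>j. x j + c \<noteq> 0" "\<And>j k. j \<noteq> k \<Longrightarrow> cmod (x j + c) \<noteq> cmod (x k + c)"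
    using exists_shift[OF x] by blast
  have injx: "inj x" using x by (simp add: Conf_lf_def)
  define g where "g t j = x j + of_real t * c" for t j
  have sub: "{j. \<exists>t\<in>{0..1}. cmod (g t j) \<le> R} \<subseteq> {j. cmod (x j) \<le> R + cmod c}" for R
  proof safe
    fix j t assume t: "t \<in> {0..(1::real)}" and le: "cmod (g t j) \<le> R"
    have "cmod (x j) \<le> cmod (g t j) + cmod (of_real t * c)"
      unfolding g_def by (metis add_diff_cancel_right' norm_triangle_ineq4 order_trans norm_triangle_ineq2 add.commute diff_add_cancel norm_diff_ineq)
    also have "cmod (of_real t * c) \<le> cmod c"
      using t by (auto simp: norm_mult intro!: mult_left_le_one_le)
    finally show "cmod (x j) \<le> R + cmod c" using le by linarith
  qed
  have "path_component_of (Metric_space.mtopology Conf_lf (dSigma \<phi>)) (g 0) (g 1)"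
  proof (rule path_lemma[OF adm])
    show "inj (g t)" for t using injx by (auto simp: inj_def g_def)
    show "continuous_on {0..1} (\<lambda>t. g t j)" for j unfolding g_def by (intro continuous_intros)
    show "finite {j. \<exists>t\<in>{0..1}. cmod (g t j) \<le> R}" for R
      by (rule finite_subset[OF sub Conf_lf_finite[OF x]])
  qed
  moreover have "g 0 = x" by (simp add: g_def fun_eq_iff)
  moreover have "cmod (g 1 j) \<le> R \<Longrightarrow> j \<in> {j. \<exists>t\<in>{0..1}. cmod (g t j) \<le> R}" for j R by force
  then have "finite {j. cmod (g 1 j) \<le> R}" for R
    by (intro finite_subset[OF _ finite_subset[OF sub Conf_lf_finite[OF x]]]) auto
  ultimately show ?thesis using c by (intro exI[of _ "g 1"]) (auto simp: g_def)
qed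

lemma step2:
  assumes adm: "admissible_tests \<phi>"
    and u: "\<And>j. u j \<noteq> 0" "\<And>j k. j \<noteq> k \<Longrightarrow> cmod (u j) \<noteq> cmod (u k)" "\<And>R. finite {j. cmod (u j) \<le> R}"
  shows "path_component_of (Metric_space.mtopology Conf_lf (dSigma \<phi>)) u (\<lambda>j. rcis (cmod (u j)) (th j))"
proof -
  define g where "g t j = rcis (cmod (u j)) ((1-t) * Arg (u j) + t * th j)" for t j
  have cm: "cmod (g t j) = cmod (u j)" for t j by (simp add: g_def)
  have "path_component_of (Metric_space.mtopology Conf_lf (dSigma \<phi>)) (g 0) (g 1)"
  proof (rule path_lemma[OF adm])
    show "inj (g t)" for t
      unfolding inj_def by (metis cm u(2))
    show "continuous_on {0..1} (\<lambda>t. g t j)" for j unfolding g_def rcis_def by (intro continuous_intros)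
    show "finite {j. \<exists>t\<in>{0..1}. cmod (g t j) \<le> R}" for R
      using u(3)[of R] by (simp add: cm)
  qed
  moreover have "g 0 = u" by (simp add: g_def rcis_cmod_Arg fun_eq_iff)
  moreover have "g 1 = (\<lambda>j. rcis (cmod (u j)) (th j))" by (simp add: g_def fun_eq_iff)
  ultimately show ?thesis by simp
qed

lemma step3:
  assumes adm: "admissible_tests \<phi>"
    and a: "\<And>j. 0 < a j" "\<And>R. finite {j. a j \<le> R}"
    and b: "\<And>j. 0 < b j" "\<And>R. finite {j. b j \<le> R}"
  shows "path_component_of (Metric_space.mtopology Conf_lf (dSigma \<phi>)) (\<lambda>j. rcis (a j) (th j)) (\<lambda>j. rcis (b j) (th j))"
proof -
  define r where "r t j = (1-t) * a j + t * b j" for t j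
  define g where "g t j = rcis (r t j) (th j)" for t j
  have rmin: "min (a j) (b j) \<le> r t j" if "t \<in> {0..1}" for t j
  proof -
    have "r t j - min (a j) (b j) = (1-t) * (a j - min (a j) (b j)) + t * (b j - min (a j) (b j))"
      by (simp add: r_def algebra_simps)
    also have "\<dots> \<ge> 0" using that by (intro add_nonneg_nonneg mult_nonneg_nonneg) auto
    finally show ?thesis by simp
  qed
  have rpos: "0 < r t j" if "t \<in> {0..1}" for t j
    using rmin[OF that, of j] a(1)[of j] b(1)[of j] by linarith
  have "path_component_of (Metric_space.mtopology Conf_lf (dSigma \<phi>)) (g 0) (g 1)"
  proof (rule path_lemma[OF adm])
    fix t :: real assume t: "t \<in> {0..1}"
    show "inj (g t)"
    proof (rule injI)
      fix j k assume "g t j = g t k"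
      then have "Arg (g t j) = Arg (g t k)" by simp
      then have "th j = th k" unfolding g_def using Arg_rcis_th rpos[OF t] by metis
      then show "j = k" by (rule th_inj)
    qed
  next
    show "continuous_on {0..1} (\<lambda>t. g t j)" for j unfolding g_def r_def rcis_def by (intro continuous_intros)
  next
    fix R
    have "{j. \<exists>t\<in>{0..1}. cmod (g t j) \<le> R} \<subseteq> {j. a j \<le> R} \<union> {j. b j \<le> R}"
    proof safe
      fix j t assume t: "t \<in> {0..(1::real)}" "cmod (g t j) \<le> R" "\<not> b j \<le> R"
      have "cmod (g t j) = r t j" using abs_of_pos[OF rpos[OF t(1)]] by (simp add: g_def)
      then show "a j \<le> R" using rmin[OF t(1), of j] t by linarith
    qed
    then show "finite {j. \<exists>t\<in>{0..1}. cmod (g t j) \<le> R}"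
      using a(2) b(2) finite_subset by blast
  qed
  moreover have "g 0 = (\<lambda>j. rcis (a j) (th j))" "g 1 = (\<lambda>j. rcis (b j) (th j))"
    by (simp_all add: g_def r_def fun_eq_iff)
  ultimately show ?thesis by simp
qed

theorem mainTheorem6:
  fixes \<phi> :: "nat \<Rightarrow> complex \<Rightarrow> real"
  assumes "admissible_tests \<phi>"
  shows "Metric_space Conf_lf (dSigma \<phi>) \<and>
         path_connected_space (Metric_space.mtopology Conf_lf (dSigma \<phi>))"
proof
  show M: "Metric_space Conf_lf (dSigma \<phi>)" by (rule metric_dSigma)
  interpret Metric_space Conf_lf "dSigma \<phi>" by (rule M)
  have canon: "\<exists>a. (\<forall>j. 0 < a j) \<and> (\<forall>R. finite {j. a j \<le> R}) \<and>
      path_component_of mtopology x (\<lambda>j. rcis (a j) (th j))" if x: "x \<in> Conf_lf" for x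
  proof -
    obtain u where u: "path_component_of mtopology x u" "\<And>j. u j \<noteq> 0"
       "\<And>j k. j \<noteq> k \<Longrightarrow> cmod (u j) \<noteq> cmod (u k)" "\<And>R. finite {j. cmod (u j) \<le> R}"
      using step1[OF assms x] by blast
    have "path_component_of mtopology x (\<lambda>j. rcis (cmod (u j)) (th j))"
      by (rule path_component_of_trans[OF u(1) step2[OF assms u(2-4)]])
    then show ?thesis using u(2,4) by (intro exI[of _ "\<lambda>j. cmod (u j)"]) auto
  qed
  show "path_connected_space mtopology"
    unfolding path_connected_space_iff_path_component
  proof (intro ballI)
    fix x y assume "x \<in> topspace mtopology" "y \<in> topspace mtopology"
    then have x: "x \<in> Conf_lf" and y: "y \<in> Conf_lf" by auto
    obtain a where a: "\<And>j. 0 < a j" "\<And>R. finite {j. a j \<le> R}"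
      "path_component_of mtopology x (\<lambda>j. rcis (a j) (th j))" using canon[OF x] by blast
    obtain b where b: "\<And>j. 0 < b j" "\<And>R. finite {j. b j \<le> R}"
      "path_component_of mtopology y (\<lambda>j. rcis (b j) (th j))" using canon[OF y] by blast
    show "path_component_of mtopology x y"
      using path_component_of_trans[OF path_component_of_trans[OF a(3) step3[OF assms a(1,2) b(1,2)]]
             path_component_of_sym[OF b(3)]] .
  qed
qed


end
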